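(* Let $\gamma\in(0,2)$, let $L$ be a positive measurable function slowly varying at infinity, and set $g(n)=n^{\gamma}L(n)$. Suppose there exist constants $C_1,C_2>0$ such that $G(x)\le C_1x^{2-\gamma}L(1/x)$ for all sufficiently small $x>0$ and $\operatorname{Var}(S_n)\ge C_2\,g(n)$ for all sufficiently large $n$. Then there exists a constant $C_3>0$ such that $G(x)>C_3x^{2-\gamma}L(1/x)$ for all sufficiently small $x>0$.
   Context: Let $X_1,X_2,\ldots$ be a sequence of centred, weakly stationary, real random variables with finite second moments. Its spectral measure is the finite Borel measure $F$ on $[-\pi,\pi]$ such that $\operatorname{Cov}(X_0,X_k)=\int_{-\pi}^{\pi}e^{\mathrm{i}tk}\,F(\mathrm{d}t)$ for all integers $k$; it is assumed that $F$ is symmetric about the origin. Define $G(x)=F([-x,x])$ for $0\le x\le\pi$, and $S_n=X_1+\cdots+X_n$. A positive measurable function $L$ is slowly varying at infinity if $L(\lambda x)/L(x)\to1$ as $x\to\infty$ for every $\lambda>0$. *)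

theory Defs
  imports "HOL-Probability.Probability"
begin

definition covar :: "'a measure \<Rightarrow> ('a \<Rightarrow> real) \<Rightarrow> ('a \<Rightarrow> real) \<Rightarrow> real" where
  "covar M X Y = (\<integral>\<omega>. (X \<omega> - (\<integral>\<omega>'. X \<omega>' \<partial>M)) * (Y \<omega> - (\<integral>\<omega>'. Y \<omega>' \<partial>M)) \<partial>M)"

definition slowly_varying :: "(real \<Rightarrow> real) \<Rightarrow> bool" where
  "slowly_varying L \<longleftrightarrow> L \<in> borel_measurable borel \<and> (\<forall>x. L x > 0) \<and>
     (\<forall>c>0. ((\<lambda>x. L (c * x) / L x) \<longlongrightarrow> 1) at_top)"

definition weakly_stationary :: "'a measure \<Rightarrow> (nat \<Rightarrow> 'a \<Rightarrow> real) \<Rightarrow> bool" where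
  "weakly_stationary M X \<longleftrightarrow>
     (\<forall>i. X i \<in> borel_measurable M \<and> integrable M (\<lambda>\<omega>. (X i \<omega>)\<^sup>2)
          \<and> (\<integral>\<omega>. X i \<omega> \<partial>M) = 0) \<and>
     (\<forall>j k. covar M (X j) (X (j + k)) = covar M (X 0) (X k))"

definition spectral_measure_of :: "'a measure \<Rightarrow> (nat \<Rightarrow> 'a \<Rightarrow> real) \<Rightarrow> real measure \<Rightarrow> bool" where
  "spectral_measure_of M X F \<longleftrightarrow>
     sets F = sets borel \<and> finite_measure F \<and> emeasure F (- {-pi..pi}) = 0 \<and>
     (\<forall>A\<in>sets borel. emeasure F (uminus ` A) = emeasure F A) \<and>
     (\<forall>k::nat. complex_of_real (covar M (X 0) (X k)) =
        (\<integral>t. exp (\<i> * complex_of_real (t * real k)) \<partial>F))"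

end

theory Submission
  imports Defs
begin



lemma ring_aux: "(D::real) \<noteq> 0 \<Longrightarrow> U \<noteq> 0 \<Longrightarrow> 36/(D*U) * (A*P) * B = 36*(A*B/D)*(P/U)"
  by (simp add: field_simps)

lemma coeff_id:
  fixes u \<gamma> :: real and j :: nat
  assumes u: "0 < u"
  shows "36/(4^j*u\<^sup>2) * ((2^(Suc j)*u) powr (2-\<gamma>)) * ((2^(Suc j)) powr (\<gamma>/2))
       = 144 * (2 powr (-(\<gamma>/2)))^(Suc j) * u powr (-\<gamma>)"
proof -
  have e1: "(2::real)^(Suc j) = 2 powr (real j + 1)"
    using powr_realpow[of 2 "Suc j"] by (simp add: add.commute)
  have e2: "(4::real)^j = 2 powr (2*real j)"
  proof -
    have "(4::real)^j = (2^2)^j" by simp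
    also have "\<dots> = 2^(2*j)" by (simp add: power_mult)
    also have "\<dots> = 2 powr (real (2*j))" using powr_realpow[of 2 "2*j"] by simp
    finally show ?thesis by simp
  qed
  have e3: "u\<^sup>2 = u powr 2" using powr_realpow[of u 2] u by simp
  have e4: "(2 powr (-(\<gamma>/2)))^(Suc j) = 2 powr (-(\<gamma>/2) * (real j + 1))"
  proof -
    have "(2 powr (-(\<gamma>/2)))^(Suc j) = (2 powr (-(\<gamma>/2))) powr (real (Suc j))"
      by (rule powr_realpow[symmetric]) simp
    also have "\<dots> = 2 powr (-(\<gamma>/2) * real (Suc j))" by (rule powr_powr)
    finally show ?thesis by (simp add: add.commute)
  qed
  have e5: "(2^(Suc j)*u) powr (2-\<gamma>) = 2 powr ((real j + 1)*(2-\<gamma>)) * u powr (2-\<gamma>)"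
  proof -
    have "(2^(Suc j)*u) powr (2-\<gamma>) = (2^(Suc j)) powr (2-\<gamma>) * u powr (2-\<gamma>)"
      using u by (intro powr_mult; simp)
    also have "((2::real)^(Suc j)) powr (2-\<gamma>) = 2 powr ((real j + 1)*(2-\<gamma>))"
      unfolding e1 by (rule powr_powr)
    finally show ?thesis .
  qed
  have e6: "((2::real)^(Suc j)) powr (\<gamma>/2) = 2 powr ((real j + 1)*(\<gamma>/2))"
    unfolding e1 by (rule powr_powr)
  have "36/(4^j*u\<^sup>2) * ((2^(Suc j)*u) powr (2-\<gamma>)) * ((2^(Suc j)) powr (\<gamma>/2))
      = 36 * (2 powr ((real j + 1)*(2-\<gamma>)) * 2 powr ((real j + 1)*(\<gamma>/2)) / 2 powr (2*real j))
           * (u powr (2-\<gamma>) / u powr 2)"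
    unfolding e2 e3 e5 e6 using u by (intro ring_aux) auto
  also have "2 powr ((real j + 1)*(2-\<gamma>)) * 2 powr ((real j + 1)*(\<gamma>/2)) / 2 powr (2*real j)
      = 2 powr ((real j + 1)*(2-\<gamma>) + (real j + 1)*(\<gamma>/2) - 2*real j)"
    by (simp only: powr_add powr_diff)
  also have "(real j + 1)*(2-\<gamma>) + (real j + 1)*(\<gamma>/2) - 2*real j = 2 + (-(\<gamma>/2) * (real j + 1))"
    by (simp add: field_simps)
  also have "u powr (2-\<gamma>) / u powr 2 = u powr (-\<gamma>)"
    by (simp only: powr_diff[symmetric]) simp
  also have "(2::real) powr (2 + (-(\<gamma>/2) * (real j + 1))) = 4 * 2 powr (-(\<gamma>/2) * (real j + 1))"
    by (simp only: powr_add) simp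
  finally show ?thesis unfolding e4 by (simp only: mult.assoc)
qed

lemma geo_le:
  fixes r :: real
  assumes "0 \<le> r" "r < 1"
  shows "(\<Sum>j<J. r^(Suc j)) \<le> 1/(1-r)"
proof -
  have "(\<Sum>j<J. r^(Suc j)) \<le> (\<Sum>j<J. r^j)"
    using assms by (intro sum_mono) (simp add: mult_left_le_one_le)
  also have "\<dots> = (1 - r^J)/(1-r)" using assms by (simp add: sum_gp_strict)
  also have "\<dots> \<le> 1/(1-r)" using assms by (simp add: divide_right_mono)
  finally show ?thesis .
qed

lemma exists_J:
  fixes u \<delta> :: real
  assumes "0 < u" "u \<le> \<delta>"
  shows "\<exists>J. 2^J*u \<le> \<delta> \<and> \<delta> < 2^(Suc J)*u"
proof -
  obtain N where N: "\<delta>/u < 2^N" using real_arch_pow[of 2 "\<delta>/u"] by auto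
  then have PN: "\<delta> < 2^N*u" using assms by (simp add: field_simps)
  have P0: "\<not> (\<delta> < 2^0*u)" using assms by simp
  obtain k where "k < N" "\<forall>i\<le>k. \<not> (\<delta> < 2^i*u)" "\<delta> < 2^(k+1)*u"
    using ex_least_nat_less[of "\<lambda>N. \<delta> < 2^N*u", OF PN P0] by auto
  then show ?thesis by (intro exI[of _ k]) auto
qed




definition kern :: "nat \<Rightarrow> real \<Rightarrow> real" where
  "kern n t = (\<Sum>i=1..n. cos (t * real i))\<^sup>2 + (\<Sum>i=1..n. sin (t * real i))\<^sup>2"

lemma kern_cmod: "kern n t = (cmod (\<Sum>i=1..n. cis t ^ i))\<^sup>2"
proof -
  have "(\<Sum>i=1..n. cis t ^ i) = (\<Sum>i=1..n. cis (t * real i))"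
  proof (intro sum.cong refl)
    fix x assume "x \<in> {1..n}"
    show "cis t ^ x = cis (t * real x)" using Complex.DeMoivre[of t x] by (simp add: mult.commute)
  qed
  then show ?thesis unfolding kern_def cmod_power2 by (simp add: Re_sum Im_sum)
qed

lemma kern_nonneg: "kern n t \<ge> 0"
  unfolding kern_def by simp

lemma kern_le_n2: "kern n t \<le> (real n)\<^sup>2"
proof -
  have "cmod (\<Sum>i=1..n. cis t ^ i) \<le> (\<Sum>i=1..n. cmod (cis t ^ i))"
    by (rule norm_sum)
  also have "\<dots> = real n" by (simp add: norm_power)
  finally show ?thesis unfolding kern_cmod by (simp add: power_mono)
qed

lemma sin_lower: fixes s :: real assumes "0 \<le> s" "s \<le> 2" shows "sin s \<ge> s / 3"
proof -
  have "\<bar>sin s - (\<Sum>m<3. sin_coeff m * s ^ m)\<bar> \<le> inverse (fact 3) * \<bar>s\<bar> ^ 3"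
    by (rule Maclaurin_sin_bound)
  moreover have "(\<Sum>m<3. sin_coeff m * s ^ m) = s"
    by (simp add: sin_coeff_def numeral_3_eq_3)
  moreover have "inverse (fact 3) * \<bar>s\<bar> ^ 3 = s^3 / 6" using assms
    by (simp add: fact_numeral)
  ultimately have "sin s \<ge> s - s^3/6" by linarith
  moreover have "s^3/6 \<le> s * 2/3"
  proof -
    have "s^2 \<le> 2^2" using assms by (intro power_mono) auto
    then have "s^2 \<le> 4" by simp
    then have "s * s^2 \<le> s * 4" using assms by (intro mult_left_mono) auto
    then show ?thesis by (simp add: power3_eq_cube power2_eq_square)
  qed
  ultimately show ?thesis by linarith
qed

lemma kern_le_tail:
  assumes t0: "t \<noteq> 0" and tpi: "\<bar>t\<bar> \<le> pi"
  shows "kern n t \<le> 36 / t\<^sup>2"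
proof -
  define z where "z = cis t"
  have sumeq: "(\<Sum>i=1..m. z ^ i) = z * (\<Sum>i<m. z ^ i)" for m
    by (induction m) (simp_all add: sum_distrib_left algebra_simps)
  have geo: "(z - 1) * (\<Sum>i=1..n. z ^ i) = z * (z^n - 1)"
    unfolding sumeq power_diff_1_eq by (simp add: algebra_simps)
  have "cmod (z * (z^n - 1)) \<le> 2"
  proof -
    have "cmod (z * (z^n - 1)) = cmod (z^n - 1)" by (simp add: z_def norm_mult)
    also have "\<dots> \<le> cmod (z^n) + cmod 1" by (rule norm_triangle_ineq4)
    also have "\<dots> = 2" by (simp add: z_def norm_power)
    finally show ?thesis .
  qed
  then have A: "cmod (z - 1) * cmod (\<Sum>i=1..n. z ^ i) \<le> 2"
    using geo by (metis norm_mult)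
  have "(cmod (z - 1))\<^sup>2 = (cos t - 1)\<^sup>2 + (sin t)\<^sup>2"
    by (simp add: z_def cmod_power2)
  also have "\<dots> = 2 - 2 * cos t"
    using sin_cos_squared_add[of t] by (simp add: power2_eq_square algebra_simps)
  also have "\<dots> = 4 * (sin (t/2))\<^sup>2"
    using cos_double_sin[of "t/2"] by simp
  also have "(sin (t/2))\<^sup>2 = (sin (\<bar>t\<bar>/2))\<^sup>2"
    by (cases "t < 0") (auto simp: abs_if)
  finally have B: "(cmod (z - 1))\<^sup>2 = 4 * (sin (\<bar>t\<bar>/2))\<^sup>2" .
  have "sin (\<bar>t\<bar>/2) \<ge> \<bar>t\<bar>/6"
    using sin_lower[of "\<bar>t\<bar>/2"] tpi pi_less_4 by auto
  then have "(sin (\<bar>t\<bar>/2))\<^sup>2 \<ge> (\<bar>t\<bar>/6)\<^sup>2" by (intro power_mono) auto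
  then have "(cmod (z - 1))\<^sup>2 \<ge> (\<bar>t\<bar>/3)\<^sup>2" using B by (simp add: power_divide)
  then have C: "cmod (z - 1) \<ge> \<bar>t\<bar>/3"
    by (rule power2_le_imp_le) auto
  have tp: "\<bar>t\<bar> > 0" using t0 by simp
  have "\<bar>t\<bar>/3 * cmod (\<Sum>i=1..n. z ^ i) \<le> 2"
    using A C by (meson mult_right_mono norm_ge_zero order_trans)
  then have D: "cmod (\<Sum>i=1..n. z ^ i) \<le> 6 / \<bar>t\<bar>" using tp by (simp add: field_simps)
  have "kern n t = (cmod (\<Sum>i=1..n. z ^ i))\<^sup>2" unfolding kern_cmod z_def ..
  also have "\<dots> \<le> (6 / \<bar>t\<bar>)\<^sup>2" using D by (intro power_mono) auto
  also have "\<dots> = 36 / t\<^sup>2" by (simp add: power_divide)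
  finally show ?thesis .
qed




lemma uct_meas:
  fixes h :: "real \<Rightarrow> real" and z :: "nat \<Rightarrow> real" and e :: real
  assumes hm: "h \<in> borel_measurable borel"
  shows "{v\<in>{0..2::real}. \<forall>m\<ge>n. \<bar>h (z m + v) - h (z m)\<bar> < e} \<in> sets lborel"
proof -
  have p: "{v. \<bar>h (z m + v) - h (z m)\<bar> < e} \<in> sets borel" for m
  proof -
    have "(\<lambda>v. \<bar>h (z m + v) - h (z m)\<bar>) \<in> borel_measurable borel"
      using hm by measurable
    then show ?thesis by measurable
  qed
  have eq: "{v\<in>{0..2::real}. \<forall>m\<ge>n. \<bar>h (z m + v) - h (z m)\<bar> < e} = {0..2} \<inter> (\<Inter>m\<in>{n..}. {v. \<bar>h (z m + v) - h (z m)\<bar> < e})"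
    by auto
  show ?thesis
    unfolding eq using p by auto
qed

lemma uct_sets:
  fixes h :: "real \<Rightarrow> real" and z :: "nat \<Rightarrow> real" and e :: real
  assumes hm: "h \<in> borel_measurable borel"
    and hlim: "\<And>u. ((\<lambda>x. h (x+u) - h x) \<longlongrightarrow> 0) at_top"
    and e: "e > 0"
    and z: "filterlim z at_top sequentially"
  shows "\<forall>\<^sub>F n in sequentially. ennreal (3/2) < emeasure lborel {v\<in>{0..2}. \<forall>m\<ge>n. \<bar>h (z m + v) - h (z m)\<bar> < e}"
proof -
  define S where "S n = {v\<in>{0..2::real}. \<forall>m\<ge>n. \<bar>h (z m + v) - h (z m)\<bar> < e}" for n
  have p: "{v. \<bar>h (z m + v) - h (z m)\<bar> < e} \<in> sets borel" for m
  proof -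
    have "(\<lambda>v. \<bar>h (z m + v) - h (z m)\<bar>) \<in> borel_measurable borel"
      using hm by measurable
    then show ?thesis by measurable
  qed
  have eq: "S n = {0..2} \<inter> (\<Inter>m\<in>{n..}. {v. \<bar>h (z m + v) - h (z m)\<bar> < e})" for n
    unfolding S_def by auto
  have meas: "S n \<in> sets lborel" for n
    unfolding eq using p by auto
  have inc: "incseq S"
    unfolding incseq_def S_def by auto
  have un: "(\<Union>n. S n) = {0..2}"
  proof
    show "(\<Union>n. S n) \<subseteq> {0..2}" unfolding S_def by auto
    show "{0..2} \<subseteq> (\<Union>n. S n)"
    proof
      fix v :: real assume v: "v \<in> {0..2}"
      have "((\<lambda>m. h (z m + v) - h (z m)) \<longlongrightarrow> 0) sequentially"
        using filterlim_compose[OF hlim[of v] z] by simp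
      then have "\<forall>\<^sub>F m in sequentially. \<bar>h (z m + v) - h (z m)\<bar> < e"
        using e by (auto dest!: tendstoD[where e=e] simp: dist_real_def)
      then obtain N where "\<forall>m\<ge>N. \<bar>h (z m + v) - h (z m)\<bar> < e"
        by (auto simp: eventually_sequentially)
      then have "v \<in> S N" using v by (auto simp: S_def)
      then show "v \<in> (\<Union>n. S n)" by blast
    qed
  qed
  have "(\<lambda>n. emeasure lborel (S n)) \<longlonglongrightarrow> emeasure lborel (\<Union>n. S n)"
    by (rule Lim_emeasure_incseq) (use meas inc in auto)
  then have "(\<lambda>n. emeasure lborel (S n)) \<longlonglongrightarrow> ennreal 2"
    using un by simp
  moreover have "ennreal (3/2) < ennreal 2" by (simp add: ennreal_less_iff)
  ultimately have "\<forall>\<^sub>F n in sequentially. ennreal (3/2) < emeasure lborel (S n)"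
    by (rule order_tendstoD)
  then show ?thesis unfolding S_def .
qed

lemma uct:
  fixes h :: "real \<Rightarrow> real" and e :: real
  assumes hm: "h \<in> borel_measurable borel"
    and hlim: "\<And>u. ((\<lambda>x. h (x+u) - h x) \<longlongrightarrow> 0) at_top"
    and e: "e > 0"
  shows "\<exists>X0. \<forall>x\<ge>X0. \<forall>s\<in>{0..1}. \<bar>h (x+s) - h x\<bar> < e"
proof (rule ccontr)
  assume "\<not> ?thesis"
  then have "\<forall>n::nat. \<exists>x. x \<ge> real n \<and> (\<exists>s. s \<in> {0..1} \<and> \<bar>h (x+s) - h x\<bar> \<ge> e)"
    by (metis linorder_not_le)
  then obtain xs ss where xs: "\<And>n. xs n \<ge> real n" and ss: "\<And>n. ss n \<in> {0..1}"
    and bad: "\<And>n. \<bar>h (xs n + ss n) - h (xs n)\<bar> \<ge> e"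
    by metis
  have zx: "filterlim xs at_top sequentially"
    by (rule filterlim_at_top_mono[OF filterlim_real_sequentially]) (use xs in auto)
  have zy: "filterlim (\<lambda>n. xs n + ss n) at_top sequentially"
  proof (rule filterlim_at_top_mono[OF filterlim_real_sequentially])
    have "real n \<le> xs n + ss n" for n using xs[of n] ss[of n] by auto
    then show "\<forall>\<^sub>F n in sequentially. real n \<le> xs n + ss n" by simp
  qed
  have e2: "e/2 > 0" using e by simp
  define A where "A n = {v\<in>{0..2::real}. \<forall>m\<ge>n. \<bar>h (xs m + v) - h (xs m)\<bar> < e/2}" for n
  define B where "B n = {v\<in>{0..2::real}. \<forall>m\<ge>n. \<bar>h ((xs m + ss m) + v) - h (xs m + ss m)\<bar> < e/2}" for n
  have "\<forall>\<^sub>F n in sequentially. ennreal (3/2) < emeasure lborel (A n) \<and> ennreal (3/2) < emeasure lborel (B n)"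
    using uct_sets[OF hm hlim e2 zx] uct_sets[OF hm hlim e2 zy] unfolding A_def B_def
    by (auto elim: eventually_elim2)
  then obtain n where An: "ennreal (3/2) < emeasure lborel (A n)" and Bn: "ennreal (3/2) < emeasure lborel (B n)"
    by (auto dest: eventually_happens)
  have measA: "A n \<in> sets lborel" unfolding A_def by (rule uct_meas[OF hm])
  have measB: "B n \<in> sets lborel" unfolding B_def by (rule uct_meas[OF hm])
  define C where "C = ((+) (- ss n)) -` B n"
  have "((+) (- ss n) -` B n \<inter> space lborel) \<in> sets lborel"
    by (rule measurable_sets[OF _ measB]) simp
  then have measC: "C \<in> sets lborel" unfolding C_def by simp
  have "emeasure lborel C = emeasure (distr lborel borel ((+) (- ss n))) (B n)"
    unfolding C_def using measB by (subst emeasure_distr) auto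
  also have "\<dots> = emeasure lborel (B n)" by (simp add: lborel_distr_plus)
  finally have Cn: "ennreal (3/2) < emeasure lborel C" using Bn by simp
  have sub: "A n \<union> C \<subseteq> {0..3}" using ss[of n] unfolding A_def B_def C_def by auto
  show False
  proof (cases "A n \<inter> C = {}")
    case True
    have "emeasure lborel (A n \<union> C) = emeasure lborel (A n) + emeasure lborel C"
      using True measA measC by (simp add: plus_emeasure)
    also have "\<dots> > ennreal (3/2) + ennreal (3/2)"
      using An Cn by (simp add: add_strict_mono)
    finally have "ennreal 3 < emeasure lborel (A n \<union> C)"
      by (simp add: ennreal_plus[symmetric] del: ennreal_plus)
    moreover have "emeasure lborel (A n \<union> C) \<le> emeasure lborel {0..3::real}"
      by (rule emeasure_mono[OF sub]) simp
    ultimately show False by simp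
  next
    case False
    then obtain w where wA: "w \<in> A n" and wC: "w \<in> C" by blast
    have 1: "\<bar>h (xs n + w) - h (xs n)\<bar> < e/2" using wA unfolding A_def by auto
    have 2: "\<bar>h ((xs n + ss n) + (w - ss n)) - h (xs n + ss n)\<bar> < e/2"
      using wC unfolding C_def B_def by auto
    have 3: "xs n + ss n + (w - ss n) = xs n + w" by simp
    have "\<bar>h (xs n + ss n) - h (xs n)\<bar> < e" using 1 2[unfolded 3] by arith
    then show False using bad[of n] by simp
  qed
qed

lemma uct_chain:
  fixes h :: "real \<Rightarrow> real"
  assumes X0: "\<forall>x\<ge>X0. \<forall>s\<in>{0..1}. \<bar>h (x+s) - h x\<bar> < e"
  shows "\<forall>x\<ge>X0. \<forall>d. 0 \<le> d \<and> d \<le> real k \<longrightarrow> \<bar>h (x+d) - h x\<bar> \<le> e * real (Suc k)"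
proof (induction k)
  case 0
  then show ?case using X0 by fastforce
next
  case (Suc k)
  show ?case
  proof (intro allI impI)
    fix x d assume x: "x \<ge> X0" and d: "0 \<le> d \<and> d \<le> real (Suc k)"
    have e0: "e > 0" using X0[rule_format, of X0 0] by auto
    show "\<bar>h (x+d) - h x\<bar> \<le> e * real (Suc (Suc k))"
    proof (cases "d \<le> 1")
      case True
      then have "\<bar>h (x+d) - h x\<bar> < e" using X0 x d by auto
      moreover have "e \<le> e * real (Suc (Suc k))" using e0 by simp
      ultimately show ?thesis by linarith
    next
      case False
      have 1: "\<bar>h (x+1) - h x\<bar> < e" using X0 x by auto
      have 2: "\<bar>h ((x+1) + (d-1)) - h (x+1)\<bar> \<le> e * real (Suc k)"
        using Suc.IH[rule_format, of "x+1" "d-1"] x d False by auto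
      have 3: "(x+1) + (d-1) = x + d" by simp
      have "\<bar>h (x+d) - h x\<bar> \<le> e * real (Suc k) + e" using 1 2[unfolded 3] by arith
      also have "\<dots> = e * real (Suc (Suc k))" by (simp add: algebra_simps)
      finally show ?thesis .
    qed
  qed
qed

lemma potter:
  fixes L :: "real \<Rightarrow> real" and \<eta> :: real
  assumes sv: "slowly_varying L" and eta: "\<eta> > 0"
  shows "\<exists>Y0>0. \<forall>y z. y \<ge> Y0 \<longrightarrow> z \<ge> Y0 \<longrightarrow> L y \<le> exp (2*\<eta>) * (max (y/z) (z/y)) powr \<eta> * L z"
proof -
  have Lm: "L \<in> borel_measurable borel" and Lpos: "\<And>x. L x > 0"
    and Llim: "\<And>c. c > 0 \<Longrightarrow> ((\<lambda>x. L (c * x) / L x) \<longlongrightarrow> 1) at_top"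
    using sv unfolding slowly_varying_def by auto
  define h where "h x = ln (L (exp x))" for x
  have hm: "h \<in> borel_measurable borel" unfolding h_def using Lm by measurable
  have hlim: "((\<lambda>x. h (x+u) - h x) \<longlongrightarrow> 0) at_top" for u
  proof -
    have "((\<lambda>x. L (exp u * exp x) / L (exp x)) \<longlongrightarrow> 1) at_top"
      using filterlim_compose[OF Llim[of "exp u"] exp_at_top] by simp
    then have "((\<lambda>x. ln (L (exp u * exp x) / L (exp x))) \<longlongrightarrow> ln 1) at_top"
      by (rule tendsto_ln) simp
    moreover have "ln (L (exp u * exp x) / L (exp x)) = h (x+u) - h x" for x
      unfolding h_def using Lpos[of "exp u * exp x"] Lpos[of "exp x"]
      by (simp add: ln_div exp_add mult.commute)
    ultimately show ?thesis by simp
  qed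
  obtain X0 where X0: "\<forall>x\<ge>X0. \<forall>s\<in>{0..1}. \<bar>h (x+s) - h x\<bar> < \<eta>"
    using uct[OF hm hlim eta] by blast
  have ch: "\<bar>h a - h b\<bar> \<le> \<eta> * (\<bar>a - b\<bar> + 2)" if a: "a \<ge> X0" and b: "b \<ge> X0" for a b
  proof -
    define k where "k = nat \<lceil>\<bar>a - b\<bar>\<rceil>"
    have k1: "\<bar>a - b\<bar> \<le> real k" unfolding k_def by linarith
    have k2: "real k \<le> \<bar>a - b\<bar> + 1" unfolding k_def by linarith
    have "\<bar>h (min a b + \<bar>a - b\<bar>) - h (min a b)\<bar> \<le> \<eta> * real (Suc k)"
      using uct_chain[OF X0, of k] a b k1 by auto
    moreover have "\<bar>h (min a b + \<bar>a - b\<bar>) - h (min a b)\<bar> = \<bar>h a - h b\<bar>"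
      by (cases "a \<le> b") (auto simp: abs_if)
    moreover have "\<eta> * real (Suc k) \<le> \<eta> * (\<bar>a - b\<bar> + 2)"
      using k2 eta by (intro mult_left_mono) auto
    ultimately show ?thesis by linarith
  qed
  show ?thesis
  proof (intro exI[of _ "exp X0"] conjI allI impI)
    show "exp X0 > 0" by simp
    fix y z assume y: "y \<ge> exp X0" and z: "z \<ge> exp X0"
    have yp: "y > 0" and zp: "z > 0" using y z exp_gt_zero[of X0] by linarith+
    have ly: "ln y \<ge> X0" using y yp by (metis ln_exp ln_le_cancel_iff exp_gt_zero)
    have lz: "ln z \<ge> X0" using z zp by (metis ln_exp ln_le_cancel_iff exp_gt_zero)
    have Ly: "L y = exp (h (ln y))" unfolding h_def using yp Lpos by simp
    have Lz: "L z = exp (h (ln z))" unfolding h_def using zp Lpos by simp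
    have mx: "max (y/z) (z/y) > 0" using yp zp by (simp add: less_max_iff_disj)
    have lm: "ln (max (y/z) (z/y)) = \<bar>ln y - ln z\<bar>"
    proof (cases "y \<le> z")
      case True
      then have "y/z \<le> 1" "1 \<le> z/y" using yp zp by auto
      then have "max (y/z) (z/y) = z/y" by auto
      then show ?thesis using True yp zp by (simp add: ln_div)
    next
      case False
      then have "z/y \<le> 1" "1 \<le> y/z" using yp zp by auto
      then have "max (y/z) (z/y) = y/z" by auto
      then show ?thesis using False yp zp by (simp add: ln_div)
    qed
    have "h (ln y) \<le> h (ln z) + \<eta> * (\<bar>ln y - ln z\<bar> + 2)" using ch[OF ly lz] by linarith
    then have "L y \<le> exp (h (ln z) + \<eta> * (\<bar>ln y - ln z\<bar> + 2))" unfolding Ly by simp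
    also have "\<dots> = exp (2*\<eta>) * (max (y/z) (z/y)) powr \<eta> * L z"
      unfolding Lz powr_def using mx lm by (simp add: exp_add[symmetric] algebra_simps)
    finally show "L y \<le> exp (2*\<eta>) * (max (y/z) (z/y)) powr \<eta> * L z" .
  qed
qed




lemma abs_mult_le_sq: "\<bar>(a::real) * b\<bar> \<le> a\<^sup>2 + b\<^sup>2"
proof -
  have "0 \<le> (\<bar>a\<bar> - \<bar>b\<bar>)\<^sup>2" by simp
  then have "2 * (\<bar>a\<bar> * \<bar>b\<bar>) \<le> a\<^sup>2 + b\<^sup>2" by (simp add: power2_eq_square algebra_simps)
  moreover have "0 \<le> \<bar>a\<bar> * \<bar>b\<bar>" by simp
  moreover have "\<bar>a * b\<bar> = \<bar>a\<bar> * \<bar>b\<bar>" by (simp add: abs_mult)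
  ultimately show ?thesis by linarith
qed

lemma var_formula:
  fixes M :: "'a measure" and X :: "nat \<Rightarrow> 'a \<Rightarrow> real" and F :: "real measure"
  assumes P: "prob_space M" and ws: "weakly_stationary M X" and sp: "spectral_measure_of M X F"
  shows "covar M (\<lambda>\<omega>. \<Sum>i=1..n. X i \<omega>) (\<lambda>\<omega>. \<Sum>i=1..n. X i \<omega>) = (\<integral>t. kern n t \<partial>F)"
proof -
  interpret prob_space M by fact
  have Xm: "\<And>i. X i \<in> borel_measurable M" and X2: "\<And>i. integrable M (\<lambda>\<omega>. (X i \<omega>)\<^sup>2)"
    and X0: "\<And>i. (\<integral>\<omega>. X i \<omega> \<partial>M) = 0"
    and stat: "\<And>j k. covar M (X j) (X (j + k)) = covar M (X 0) (X k)"
    using ws unfolding weakly_stationary_def by auto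
  have setsF: "sets F = sets borel" and finF: "finite_measure F"
    and spec: "\<And>k::nat. complex_of_real (covar M (X 0) (X k)) =
        (\<integral>t. exp (\<i> * complex_of_real (t * real k)) \<partial>F)"
    using sp unfolding spectral_measure_of_def by auto
  interpret F: finite_measure F by fact
  have measF: "borel_measurable F = borel_measurable borel"
    by (rule measurable_cong_sets[OF setsF refl])
  have Xi: "integrable M (X i)" for i using square_integrable_imp_integrable[OF Xm X2] .
  have XX: "integrable M (\<lambda>\<omega>. X i \<omega> * X j \<omega>)" for i j
  proof (rule Bochner_Integration.integrable_bound[OF Bochner_Integration.integrable_add[OF X2[of i] X2[of j]]])
    show "(\<lambda>\<omega>. X i \<omega> * X j \<omega>) \<in> borel_measurable M" using Xm by measurable
    show "AE \<omega> in M. norm (X i \<omega> * X j \<omega>) \<le> norm ((X i \<omega>)\<^sup>2 + (X j \<omega>)\<^sup>2)"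
      using abs_mult_le_sq by auto
  qed
  have cov: "covar M (X i) (X j) = (\<integral>\<omega>. X i \<omega> * X j \<omega> \<partial>M)" for i j
    unfolding covar_def X0 by simp
  have cosint: "integrable F (\<lambda>t. cos (t * r))" for r
    by (rule F.integrable_const_bound[where B=1]) (auto simp: measF)
  have ck: "covar M (X 0) (X k) = (\<integral>t. cos (t * real k) \<partial>F)" for k
  proof -
    have int: "integrable F (\<lambda>t. exp (\<i> * complex_of_real (t * real k)))"
      by (rule F.integrable_const_bound[where B=1]) (auto simp: measF norm_exp_i_times)
    have "covar M (X 0) (X k) = Re (complex_of_real (covar M (X 0) (X k)))" by simp
    also have "\<dots> = Re (\<integral>t. exp (\<i> * complex_of_real (t * real k)) \<partial>F)" by (simp only: spec)
    also have "\<dots> = (\<integral>t. Re (exp (\<i> * complex_of_real (t * real k))) \<partial>F)"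
      using int by simp
    also have "\<dots> = (\<integral>t. cos (t * real k) \<partial>F)" by (simp add: Re_exp)
    finally show ?thesis .
  qed
  have cij: "covar M (X i) (X j) = (\<integral>t. cos (t * (real j - real i)) \<partial>F)" for i j
  proof (cases "i \<le> j")
    case True
    have "covar M (X i) (X j) = covar M (X i) (X (i + (j - i)))" using True by simp
    also have "\<dots> = (\<integral>t. cos (t * real (j - i)) \<partial>F)" by (simp only: stat ck)
    finally show ?thesis using True by (simp add: of_nat_diff)
  next
    case False
    have "covar M (X i) (X j) = covar M (X j) (X i)" by (simp add: cov mult.commute)
    also have "\<dots> = covar M (X j) (X (j + (i - j)))" using False by simp
    also have "\<dots> = (\<integral>t. cos (t * real (i - j)) \<partial>F)" by (simp only: stat ck)
    also have "\<dots> = (\<integral>t. cos (t * (real j - real i)) \<partial>F)"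
    proof (rule Bochner_Integration.integral_cong[OF refl])
      fix t
      have "t * (real j - real i) = - (t * real (i - j))" using False by (simp add: of_nat_diff algebra_simps)
      then show "cos (t * real (i - j)) = cos (t * (real j - real i))" by simp
    qed
    finally show ?thesis .
  qed
  have ES: "(\<integral>\<omega>. (\<Sum>i=1..n. X i \<omega>) \<partial>M) = 0"
    using Xi X0 by (simp add: integral_sum)
  have "covar M (\<lambda>\<omega>. \<Sum>i=1..n. X i \<omega>) (\<lambda>\<omega>. \<Sum>i=1..n. X i \<omega>)
      = (\<integral>\<omega>. (\<Sum>i=1..n. \<Sum>j=1..n. X i \<omega> * X j \<omega>) \<partial>M)"
    unfolding covar_def ES by (simp add: sum_product)
  also have "\<dots> = (\<Sum>i=1..n. \<Sum>j=1..n. (\<integral>\<omega>. X i \<omega> * X j \<omega> \<partial>M))"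
    using XX by (simp add: integral_sum)
  also have "\<dots> = (\<Sum>i=1..n. \<Sum>j=1..n. (\<integral>t. cos (t * (real j - real i)) \<partial>F))"
    by (simp add: cov[symmetric] cij)
  also have "\<dots> = (\<integral>t. (\<Sum>i=1..n. \<Sum>j=1..n. cos (t * (real j - real i))) \<partial>F)"
    using cosint by (simp add: integral_sum)
  also have "\<dots> = (\<integral>t. kern n t \<partial>F)"
  proof (rule Bochner_Integration.integral_cong[OF refl])
    fix t
    have "(\<Sum>i=1..n. \<Sum>j=1..n. cos (t * (real j - real i)))
        = (\<Sum>i=1..n. \<Sum>j=1..n. cos (t * real i) * cos (t * real j) + sin (t * real i) * sin (t * real j))"
      by (simp add: right_diff_distrib cos_diff mult.commute)
    also have "\<dots> = kern n t"
      unfolding kern_def power2_eq_square sum_product sum.distrib by simp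
    finally show "(\<Sum>i=1..n. \<Sum>j=1..n. cos (t * (real j - real i))) = kern n t" .
  qed
  finally show ?thesis .
qed




lemma dyadic_tail:
  fixes u t :: real
  assumes "0 < u" "u < \<bar>t\<bar>"
  shows "36/t\<^sup>2 \<le> (\<Sum>j<J. 36/(4^j*u\<^sup>2) * indicator {-(2^(Suc j)*u)..2^(Suc j)*u} t) + 36/(4^J*u\<^sup>2)"
  using assms
proof (induction J arbitrary: u)
  case 0
  then have "u\<^sup>2 < t\<^sup>2" by (metis abs_of_pos abs_power2 power2_abs power_strict_mono less_le_trans zero_less_two order_less_imp_le pos2)
  then show ?case using 0 by (simp add: frac_le less_imp_le)
next
  case (Suc J)
  define f where "f w k = 36/(4^k*w\<^sup>2) * indicator {-(2^(Suc k)*w)..2^(Suc k)*w} t" for w :: real and k :: nat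
  have fnn: "f v j \<ge> 0" for v j unfolding f_def by simp
  have shift: "f u (Suc j) = f (2*u) j" for j
    unfolding f_def by (simp add: power2_eq_square algebra_simps)
  have tail: "36/(4^(Suc J)*u\<^sup>2) = 36/(4^J*(2*u)\<^sup>2)"
    by (simp add: power2_eq_square algebra_simps)
  have sumeq: "(\<Sum>j<Suc J. f u j) = f u 0 + (\<Sum>j<J. f (2*u) j)"
    by (simp only: sum.lessThan_Suc_shift shift)
  show ?case
  proof (cases "\<bar>t\<bar> \<le> 2*u")
    case True
    have "u\<^sup>2 < t\<^sup>2" using Suc.prems by (metis abs_of_pos abs_power2 power2_abs power_strict_mono less_le_trans zero_less_two order_less_imp_le pos2)
    then have "36/t\<^sup>2 \<le> 36/u\<^sup>2" using Suc.prems by (simp add: frac_le less_imp_le)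
    also have "\<dots> = f u 0" using True unfolding f_def by (auto simp: indicator_def abs_le_iff)
    also have "\<dots> \<le> (\<Sum>j<Suc J. f u j) + 36/(4^(Suc J)*u\<^sup>2)"
      unfolding sumeq using fnn by (simp add: sum_nonneg)
    finally show ?thesis unfolding f_def .
  next
    case False
    have "36/t\<^sup>2 \<le> (\<Sum>j<J. f (2*u) j) + 36/(4^J*(2*u)\<^sup>2)"
      using Suc.IH[of "2*u"] Suc.prems False unfolding f_def by auto
    also have "\<dots> \<le> (\<Sum>j<Suc J. f u j) + 36/(4^(Suc J)*u\<^sup>2)"
      unfolding sumeq tail using fnn[of u 0] by simp
    finally show ?thesis unfolding f_def .
  qed
qed

lemma kern_step:
  fixes u t :: real
  assumes "0 < u" "\<bar>t\<bar> \<le> pi"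
  shows "kern n t \<le> (real n)\<^sup>2 * indicator {-u..u} t
     + (\<Sum>j<J. 36/(4^j*u\<^sup>2) * indicator {-(2^(Suc j)*u)..2^(Suc j)*u} t) + 36/(4^J*u\<^sup>2)"
proof -
  have nn: "0 \<le> (\<Sum>j<J. 36/(4^j*u\<^sup>2) * indicator {-(2^(Suc j)*u)..2^(Suc j)*u} t) + 36/(4^J*u\<^sup>2)"
    by (intro add_nonneg_nonneg sum_nonneg) auto
  show ?thesis
  proof (cases "\<bar>t\<bar> \<le> u")
    case True
    then have "(real n)\<^sup>2 * indicator {-u..u} t = (real n)\<^sup>2" by (auto simp: indicator_def abs_le_iff)
    then show ?thesis using kern_le_n2[of n t] nn by linarith
  next
    case False
    then have "t \<noteq> 0" using assms by auto
    then have "kern n t \<le> 36/t\<^sup>2" using kern_le_tail assms by auto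
    also have "\<dots> \<le> (\<Sum>j<J. 36/(4^j*u\<^sup>2) * indicator {-(2^(Suc j)*u)..2^(Suc j)*u} t) + 36/(4^J*u\<^sup>2)"
      using dyadic_tail[of u t J] assms False by auto
    finally have K: "kern n t \<le> (\<Sum>j<J. 36/(4^j*u\<^sup>2) * indicator {-(2^(Suc j)*u)..2^(Suc j)*u} t) + 36/(4^J*u\<^sup>2)" .
    have "0 \<le> (real n)\<^sup>2 * indicator {-u..u} t" by simp
    then show ?thesis using K by linarith
  qed
qed

lemma var_bound:
  fixes F :: "real measure" and u :: real
  assumes setsF: "sets F = sets borel" and finF: "finite_measure F"
    and supp: "emeasure F (- {-pi..pi}) = 0" and u: "0 < u"
  shows "(\<integral>t. kern n t \<partial>F) \<le> (real n)\<^sup>2 * measure F {-u..u}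
     + (\<Sum>j<J. 36/(4^j*u\<^sup>2) * measure F {-(2^(Suc j)*u)..2^(Suc j)*u}) + 36/(4^J*u\<^sup>2) * measure F (space F)"
proof -
  interpret F: finite_measure F by fact
  have measF: "borel_measurable F = borel_measurable borel"
    by (rule measurable_cong_sets[OF setsF refl])
  have spF: "space F = UNIV" using sets_eq_imp_space_eq[OF setsF] by simp
  have setsI: "{a..b} \<in> sets F" for a b :: real using setsF by simp
  have intI: "integrable F (indicator {a..b} :: real \<Rightarrow> real)" for a b :: real
  proof (rule integrable_real_indicator)
    show "{a..b} \<in> sets F" by (rule setsI)
    show "emeasure F {a..b} < \<infinity>" using F.emeasure_finite[of "{a..b}"] by (simp add: less_top[symmetric])
  qed
  have intI': "integrable F (\<lambda>t. c * indicator {a..b} t :: real)" for c a b :: real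
    using intI by (intro integrable_mult_right) 
  have intK: "integrable F (kern n)"
  proof (rule F.integrable_const_bound[where B="(real n)\<^sup>2"])
    show "AE x in F. norm (kern n x) \<le> (real n)\<^sup>2" using kern_le_n2 kern_nonneg by auto
    show "kern n \<in> borel_measurable F" unfolding measF kern_def by measurable
  qed
  have AEpi: "AE t in F. \<bar>t\<bar> \<le> pi"
  proof (rule AE_I')
    show "- {-pi..pi} \<in> null_sets F" using supp setsF by (auto intro: null_setsI)
    show "{x \<in> space F. \<not> \<bar>x\<bar> \<le> pi} \<subseteq> - {-pi..pi}" by auto
  qed
  have "(\<integral>t. kern n t \<partial>F) \<le> (\<integral>t. (real n)\<^sup>2 * indicator {-u..u} t
     + (\<Sum>j<J. 36/(4^j*u\<^sup>2) * indicator {-(2^(Suc j)*u)..2^(Suc j)*u} t) + 36/(4^J*u\<^sup>2) \<partial>F)"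
  proof (rule integral_mono_AE[OF intK])
    show "integrable F (\<lambda>t. (real n)\<^sup>2 * indicator {-u..u} t
     + (\<Sum>j<J. 36/(4^j*u\<^sup>2) * indicator {-(2^(Suc j)*u)..2^(Suc j)*u} t) + 36/(4^J*u\<^sup>2))"
      by (intro Bochner_Integration.integrable_add Bochner_Integration.integrable_sum intI') auto
    show "AE t in F. kern n t \<le> (real n)\<^sup>2 * indicator {-u..u} t
     + (\<Sum>j<J. 36/(4^j*u\<^sup>2) * indicator {-(2^(Suc j)*u)..2^(Suc j)*u} t) + 36/(4^J*u\<^sup>2)"
      using AEpi by eventually_elim (rule kern_step[OF u])
  qed
  also have "\<dots> = (real n)\<^sup>2 * measure F {-u..u}
     + (\<Sum>j<J. 36/(4^j*u\<^sup>2) * measure F {-(2^(Suc j)*u)..2^(Suc j)*u}) + 36/(4^J*u\<^sup>2) * measure F (space F)"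
    using intI' intI by (simp add: Bochner_Integration.integral_add Bochner_Integration.integral_sum
        Bochner_Integration.integrable_sum spF)
  finally show ?thesis .
qed




theorem lemma3:
  fixes M :: "'a measure" and X :: "nat \<Rightarrow> 'a \<Rightarrow> real" and F :: "real measure"
    and L :: "real \<Rightarrow> real" and \<gamma> C1 C2 :: real
  assumes "prob_space M"
    and "weakly_stationary M X"
    and "spectral_measure_of M X F"
    and "0 < \<gamma>" and "\<gamma> < 2"
    and "slowly_varying L"
    and "C1 > 0" and "C2 > 0"
    and "\<forall>\<^sub>F x in at_right 0. measure F {-x..x} \<le> C1 * x powr (2 - \<gamma>) * L (1 / x)"
    and "\<forall>\<^sub>F n in sequentially.
           covar M (\<lambda>\<omega>. \<Sum>i=1..n. X i \<omega>) (\<lambda>\<omega>. \<Sum>i=1..n. X i \<omega>)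
             \<ge> C2 * (real n powr \<gamma> * L (real n))"
  shows "\<exists>C3>0. \<forall>\<^sub>F x in at_right 0. measure F {-x..x} > C3 * x powr (2 - \<gamma>) * L (1 / x)"
proof -
  note sp = assms(3)
  have setsF: "sets F = sets borel" and finF: "finite_measure F"
    and supp: "emeasure F (- {-pi..pi}) = 0"
    using sp unfolding spectral_measure_of_def by auto
  interpret F: finite_measure F by fact
  define G where "G x = measure F {-x..x}" for x
  have Gnn: "G x \<ge> 0" for x unfolding G_def by simp
  define \<eta> where "\<eta> = \<gamma>/2"
  have eta: "\<eta> > 0" using assms(4) unfolding \<eta>_def by simp
  have Lpos: "\<And>x. L x > 0" using assms(6) unfolding slowly_varying_def by auto
  obtain Y0 where Y0: "Y0 > 0" and pot0: "\<forall>y z. y \<ge> Y0 \<longrightarrow> z \<ge> Y0 \<longrightarrow> L y \<le> exp (2*\<eta>) * (max (y/z) (z/y)) powr \<eta> * L z"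
    using potter[OF assms(6) eta] by blast
  define E where "E = exp (2*\<eta>)"
  have Epos: "E > 0" unfolding E_def by simp
  have pot: "\<And>y z. y \<ge> Y0 \<Longrightarrow> z \<ge> Y0 \<Longrightarrow> L y \<le> E * (max (y/z) (z/y)) powr \<eta> * L z"
    using pot0 unfolding E_def by blast
  obtain \<delta>0 where d0: "\<delta>0 > 0" and Gup: "\<And>x. 0 < x \<Longrightarrow> x < \<delta>0 \<Longrightarrow> G x \<le> C1 * x powr (2 - \<gamma>) * L (1 / x)"
    using assms(9) unfolding eventually_at_right_field G_def by auto
  define \<delta> where "\<delta> = min (\<delta>0/2) (1/Y0)"
  have dpos: "\<delta> > 0" and dd0: "\<delta> < \<delta>0" and dY: "\<delta> \<le> 1/Y0"
    using d0 Y0 unfolding \<delta>_def by auto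
  have invY: "1/t \<ge> Y0" if "0 < t" "t \<le> \<delta>" for t
  proof -
    have "t \<le> 1/Y0" using that dY by linarith
    then show ?thesis using that Y0 by (simp add: field_simps)
  qed
  define r where "r = 2 powr (-\<eta>)"
  have r0: "0 \<le> r" and r1: "r < 1" unfolding r_def using eta by (auto intro: powr_less_one)
  define Ftot where "Ftot = measure F (space F)"
  have Ftot0: "Ftot \<ge> 0" unfolding Ftot_def by simp
  define K1 where "K1 = 144 * C1 * E / (1 - r)"
  define K2 where "K2 = 144 * Ftot / \<delta>\<^sup>2"
  have K1nn: "K1 \<ge> 0" unfolding K1_def using assms(7) Epos r1 by simp
  have K2nn: "K2 \<ge> 0" unfolding K2_def using Ftot0 by simp
  define V where "V n = covar M (\<lambda>\<omega>. \<Sum>i=1..n. X i \<omega>) (\<lambda>\<omega>. \<Sum>i=1..n. X i \<omega>)" for n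
  have Vint: "V n = (\<integral>t. kern n t \<partial>F)" for n
    unfolding V_def by (rule var_formula[OF assms(1-3)])
  have stepE: "V n \<le> (real n)\<^sup>2 * G u + K1 * u powr (-\<gamma>) * L (1/u) + K2"
    if u0: "0 < u" and ud: "u \<le> \<delta>" for n u
  proof -
    obtain J where J1: "2^J*u \<le> \<delta>" and J2: "\<delta> < 2^(Suc J)*u" using exists_J[OF u0 ud] by blast
    have VB: "V n \<le> (real n)\<^sup>2 * G u + (\<Sum>j<J. 36/(4^j*u\<^sup>2) * G (2^(Suc j)*u)) + 36/(4^J*u\<^sup>2) * Ftot"
      unfolding Vint G_def Ftot_def by (rule var_bound[OF setsF finF supp u0])
    have tm: "36/(4^j*u\<^sup>2) * G (2^(Suc j)*u) \<le> 144 * C1 * E * r^(Suc j) * u powr (-\<gamma>) * L (1/u)"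
      if j: "j < J" for j
    proof -
      define s where "s = 2^(Suc j)*u"
      have s0: "s > 0" unfolding s_def using u0 by simp
      have "s \<le> 2^J*u" unfolding s_def using j u0 by (intro mult_right_mono power_increasing) auto
      then have sd: "s \<le> \<delta>" using J1 by linarith
      have Gs: "G s \<le> C1 * s powr (2 - \<gamma>) * L (1/s)" using Gup[OF s0] sd dd0 by linarith
      have mx: "max ((1/s)/(1/u)) ((1/u)/(1/s)) = 2^(Suc j)"
      proof -
        have a: "(1/u)/(1/s) = 2^(Suc j)" unfolding s_def using u0 by simp
        have c: "(1::real) \<le> 2^(Suc j)" by (rule one_le_power) simp
        have b: "(1/s)/(1/u) \<le> 1" unfolding s_def using u0 c by (simp add: field_simps)
        from c show ?thesis using a b by (simp add: max_def)
      qed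
      have Ls: "L (1/s) \<le> E * (2^(Suc j)) powr \<eta> * L (1/u)"
        using pot[OF invY[OF s0 sd] invY[OF u0 ud]] unfolding mx .
      have "36/(4^j*u\<^sup>2) * G s \<le> 36/(4^j*u\<^sup>2) * (C1 * s powr (2 - \<gamma>) * (E * (2^(Suc j)) powr \<eta> * L (1/u)))"
        using Gs Ls assms(7) Lpos[of "1/u"] by (intro mult_left_mono order_trans[OF Gs] mult_left_mono) auto
      also have "\<dots> = C1 * E * L (1/u) * (36/(4^j*u\<^sup>2) * (s powr (2 - \<gamma>)) * ((2^(Suc j)) powr (\<gamma>/2)))"
        unfolding \<eta>_def by (simp add: algebra_simps)
      also have "\<dots> = C1 * E * L (1/u) * (144 * r^(Suc j) * u powr (-\<gamma>))"
        unfolding s_def r_def \<eta>_def using coeff_id[OF u0, of j \<gamma>] by simp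
      finally show ?thesis unfolding s_def by (simp add: algebra_simps)
    qed
    have "(\<Sum>j<J. 36/(4^j*u\<^sup>2) * G (2^(Suc j)*u)) \<le> (\<Sum>j<J. 144 * C1 * E * u powr (-\<gamma>) * L (1/u) * r^(Suc j))"
      using tm by (intro sum_mono) (simp add: algebra_simps)
    also have "\<dots> = 144 * C1 * E * u powr (-\<gamma>) * L (1/u) * (\<Sum>j<J. r^(Suc j))"
      by (simp add: sum_distrib_left)
    also have "\<dots> \<le> 144 * C1 * E * u powr (-\<gamma>) * L (1/u) * (1/(1-r))"
      using geo_le[OF r0 r1, of J] assms(7) Epos Lpos[of "1/u"] by (intro mult_left_mono) auto
    also have "\<dots> = K1 * u powr (-\<gamma>) * L (1/u)" unfolding K1_def by simp
    finally have S1: "(\<Sum>j<J. 36/(4^j*u\<^sup>2) * G (2^(Suc j)*u)) \<le> K1 * u powr (-\<gamma>) * L (1/u)" .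
    have S2: "36/(4^J*u\<^sup>2) * Ftot \<le> K2"
    proof -
      have e4: "(4::real)^J = (2^J)\<^sup>2"
      proof -
        have "(4::real)^J = (2^2)^J" by simp
        also have "\<dots> = (2^J)^2" by (metis power_mult mult.commute)
        finally show ?thesis .
      qed
      have e: "(4::real)^J*u\<^sup>2 = (2^J*u)\<^sup>2" unfolding e4 by (simp add: power_mult_distrib)
      have "\<delta> < 2 * (2^J*u)" using J2 by simp
      then have "\<delta>\<^sup>2 < (2 * (2^J*u))\<^sup>2" using dpos by (intro power_strict_mono) auto
      then have "\<delta>\<^sup>2 < 4 * (4^J*u\<^sup>2)" unfolding e by (simp add: power_mult_distrib)
      then have "36/(4^J*u\<^sup>2) \<le> 144/\<delta>\<^sup>2" using dpos u0 by (simp add: field_simps)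
      then have "36/(4^J*u\<^sup>2) * Ftot \<le> 144/\<delta>\<^sup>2 * Ftot" using Ftot0 by (rule mult_right_mono)
      then show ?thesis unfolding K2_def by simp
    qed
    show ?thesis using VB S1 S2 by linarith
  qed
  define a where "a = (4*K1*E/C2 + 1) powr (1/\<eta>)"
  have a1: "a \<ge> 1" unfolding a_def using K1nn Epos assms(8) eta
    by (intro ge_one_powr_ge_zero) auto
  have aeta: "a powr \<eta> = 4*K1*E/C2 + 1" unfolding a_def using K1nn Epos assms(8) eta
    by (simp add: powr_powr)
  obtain N1 where N1: "\<And>n. n \<ge> N1 \<Longrightarrow> V n \<ge> C2 * (real n powr \<gamma> * L (real n))"
    using assms(10) unfolding V_def eventually_sequentially by auto
  define B where "B = 4*K2*E/(C2 * L Y0 * Y0 powr \<eta>)"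
  have Bnn: "B \<ge> 0" unfolding B_def using K2nn Epos assms(8) Lpos[of Y0] Y0 by simp
  define Nthr where "Nthr = max (max (a/\<delta>) (a*Y0)) (max (max Y0 (real N1)) (max (B powr (1/\<eta>)) 1))"
  have key: "(real n)\<^sup>2 * G (a / real n) \<ge> C2/2 * (real n powr \<gamma> * L (real n))"
    if nN: "real n \<ge> Nthr" for n
  proof -
    have n1: "real n \<ge> 1" and nad: "real n \<ge> a/\<delta>" and naY: "real n \<ge> a*Y0" and nY: "real n \<ge> Y0"
      and nN1: "n \<ge> N1" and nB: "real n \<ge> B powr (1/\<eta>)"
      using nN unfolding Nthr_def by auto
    have npos: "real n > 0" using n1 by simp
    have apos: "a > 0" using a1 by simp
    have u0: "a / real n > 0" using npos apos by simp
    have ud: "a / real n \<le> \<delta>" using nad dpos npos by (simp add: field_simps)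
    have E1: "V n \<le> (real n)\<^sup>2 * G (a / real n) + K1 * (a / real n) powr (-\<gamma>) * L (real n / a) + K2"
      using stepE[OF u0 ud, of n] by simp
    have na: "real n / a \<ge> Y0" using naY apos by (simp add: field_simps)
    have mx: "max ((real n / a) / real n) (real n / (real n / a)) = a"
    proof -
      have aa: "1 \<le> a*a" using a1 mult_mono[of 1 a 1 a] by simp
      show ?thesis using npos apos a1 aa by (simp add: max_def field_simps)
    qed
    have Lna: "L (real n / a) \<le> E * a powr \<eta> * L (real n)"
      using pot[OF na nY] unfolding mx .
    have pw: "(a / real n) powr (-\<gamma>) = real n powr \<gamma> / a powr \<gamma>"
      using npos apos by (simp add: powr_divide powr_minus_divide)
    have "K1 * (a / real n) powr (-\<gamma>) * L (real n / a) \<le> K1 * (real n powr \<gamma> / a powr \<gamma>) * (E * a powr \<eta> * L (real n))"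
      unfolding pw using K1nn Lna by (intro mult_left_mono) auto
    also have "\<dots> = K1 * E / a powr \<eta> * (real n powr \<gamma> * L (real n))"
    proof -
      have "a powr \<gamma> = a powr \<eta> * a powr \<eta>" unfolding \<eta>_def by (simp add: powr_add[symmetric])
      moreover have "a powr \<eta> > 0" using apos by simp
      ultimately show ?thesis by (simp add: field_simps)
    qed
    also have "\<dots> \<le> C2/4 * (real n powr \<gamma> * L (real n))"
    proof (rule mult_right_mono)
      have "0 \<le> 4*K1*E/C2" using assms(8) K1nn Epos by simp
      then have d: "4*K1*E/C2 + 1 > 0" by linarith
      have "K1*E \<le> C2/4 * (4*K1*E/C2 + 1)" using assms(8) by (simp add: field_simps)
      then show "K1 * E / a powr \<eta> \<le> C2/4" unfolding aeta using d by (simp add: pos_divide_le_eq)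
      show "0 \<le> real n powr \<gamma> * L (real n)" using Lpos[of "real n"] by simp
    qed
    finally have E2: "K1 * (a / real n) powr (-\<gamma>) * L (real n / a) \<le> C2/4 * (real n powr \<gamma> * L (real n))" .
    have E3: "K2 \<le> C2/4 * (real n powr \<gamma> * L (real n))"
    proof -
      have mx2: "max (Y0 / real n) (real n / Y0) = real n / Y0"
      proof -
        have yy: "Y0 * Y0 \<le> real n * real n" using nY Y0 by (intro mult_mono) auto
        show ?thesis using nY Y0 npos yy by (simp add: max_def field_simps)
      qed
      have LY: "L Y0 \<le> E * (real n / Y0) powr \<eta> * L (real n)"
        using pot[OF order_refl nY] unfolding mx2 .
      have nb: "real n powr \<eta> \<ge> B"
      proof -
        have "(B powr (1/\<eta>)) powr \<eta> \<le> real n powr \<eta>" using nB eta by (intro powr_mono2) auto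
        moreover have "(B powr (1/\<eta>)) powr \<eta> = B" using Bnn eta by (simp add: powr_powr)
        ultimately show ?thesis by simp
      qed
      have "L Y0 * Y0 powr \<eta> \<le> E * real n powr \<eta> * L (real n)"
      proof -
        have "L Y0 * Y0 powr \<eta> \<le> E * (real n / Y0) powr \<eta> * L (real n) * Y0 powr \<eta>"
          using LY by (intro mult_right_mono) auto
        also have "\<dots> = E * real n powr \<eta> * L (real n)"
          using Y0 by (simp add: powr_divide)
        finally show ?thesis .
      qed
      then have "L Y0 * Y0 powr \<eta> * real n powr \<eta> \<le> E * real n powr \<eta> * L (real n) * real n powr \<eta>"
        by (intro mult_right_mono) auto
      also have "\<dots> = E * (real n powr \<gamma> * L (real n))"
        unfolding \<eta>_def by (simp add: powr_add[symmetric] algebra_simps)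
      finally have g1: "L Y0 * Y0 powr \<eta> * real n powr \<eta> \<le> E * (real n powr \<gamma> * L (real n))" .
      have cpos: "L Y0 * Y0 powr \<eta> > 0" using Lpos[of Y0] Y0 by simp
      have "K2 = C2/4 * (B * (L Y0 * Y0 powr \<eta>)) / E"
        unfolding B_def using Epos assms(8) cpos Y0 Lpos[of Y0] by (simp add: field_simps)
      also have "\<dots> \<le> C2/4 * (real n powr \<eta> * (L Y0 * Y0 powr \<eta>)) / E"
        using nb cpos assms(8) Epos by (intro divide_right_mono mult_left_mono mult_right_mono) auto
      also have "\<dots> \<le> C2/4 * (E * (real n powr \<gamma> * L (real n))) / E"
        using g1 assms(8) Epos by (intro divide_right_mono mult_left_mono) (auto simp: algebra_simps)
      also have "\<dots> = C2/4 * (real n powr \<gamma> * L (real n))" using Epos by simp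
      finally show ?thesis .
    qed
    have "C2 * (real n powr \<gamma> * L (real n)) \<le> V n" by (rule N1[OF nN1])
    then show ?thesis using E1 E2 E3 by linarith
  qed
  have N1: "Nthr \<ge> 1" unfolding Nthr_def by simp
  have apos: "a > 0" using a1 by simp
  define P where "P = (2*a) powr (\<gamma> - 2) / (E * (2*a) powr \<eta>)"
  have Ppos: "P > 0" unfolding P_def using apos Epos by simp
  define C3 where "C3 = C2/2 * P / 2"
  have C3pos: "C3 > 0" unfolding C3_def using Ppos assms(8) by simp
  have fin: "G x > C3 * x powr (2 - \<gamma>) * L (1 / x)"
    if x0: "0 < x" and xa: "x < a" and xY: "x < 1/Y0" and xN: "x < a/(Nthr+1)" for x
  proof -
    define n where "n = nat \<lceil>a/x\<rceil>"
    have ax1: "a/x > 1" using xa x0 by (simp add: field_simps)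
    have c0: "0 \<le> \<lceil>a/x\<rceil>" using ax1 by (simp add: zero_le_ceiling)
    have rn: "real n = real_of_int \<lceil>a/x\<rceil>" unfolding n_def using c0 by simp
    have rn1: "real n \<ge> a/x" unfolding rn by (rule le_of_int_ceiling)
    have rn2: "real n \<le> a/x + 1" unfolding rn by (rule of_int_ceiling_le_add_one)
    have "a/x > Nthr + 1" using xN x0 N1 by (simp add: field_simps)
    then have nN: "real n \<ge> Nthr" using rn1 by linarith
    have npos: "real n > 0" using nN N1 by linarith
    have K: "(real n)\<^sup>2 * G (a / real n) \<ge> C2/2 * (real n powr \<gamma> * L (real n))" by (rule key[OF nN])
    have an: "a / real n \<le> x" using rn1 x0 npos by (simp add: field_simps)
    have Gmono: "G (a / real n) \<le> G x"
      unfolding G_def using an setsF by (intro F.finite_measure_mono) auto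
    have Gan: "G (a / real n) \<ge> C2/2 * real n powr (\<gamma> - 2) * L (real n)"
    proof -
      have "real n powr (\<gamma> - 2) = real n powr \<gamma> / (real n)\<^sup>2"
        using npos powr_realpow[of "real n" 2] by (simp add: powr_diff)
      then have "C2/2 * real n powr (\<gamma> - 2) * L (real n) = C2/2 * (real n powr \<gamma> * L (real n)) / (real n)\<^sup>2"
        by simp
      also have "\<dots> \<le> G (a / real n)" using K npos by (simp add: pos_divide_le_eq mult.commute)
      finally show ?thesis .
    qed
    have n2a: "real n \<le> 2*a/x"
    proof -
      have "2*a/x = a/x + a/x" by simp
      then show ?thesis using rn2 ax1 by linarith
    qed
    have pw1: "real n powr (\<gamma> - 2) \<ge> (2*a/x) powr (\<gamma> - 2)"
      using n2a npos assms(5) by (intro powr_mono2') auto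
    have pw2: "(2*a/x) powr (\<gamma> - 2) = (2*a) powr (\<gamma> - 2) * x powr (2 - \<gamma>)"
    proof -
      have "x powr (2 - \<gamma>) = 1 / x powr (\<gamma> - 2)"
        using powr_minus_divide[of x "\<gamma> - 2"] by simp
      then show ?thesis by (simp add: powr_divide)
    qed
    have Ln: "L (1/x) \<le> E * (2*a) powr \<eta> * L (real n)"
    proof -
      have ix: "1/x \<ge> Y0" using xY x0 Y0 by (simp add: field_simps)
      have nY: "real n \<ge> Y0" using nN unfolding Nthr_def by auto
      have nx1: "real n * x \<ge> a" using rn1 x0 by (simp add: field_simps)
      have nx2: "real n * x \<le> 2*a" using n2a x0 by (simp add: field_simps)
      have m1: "(1/x) / real n \<le> 2*a"
      proof -
        have "(1/x) / real n = 1 / (real n * x)" by simp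
        also have "\<dots> \<le> 1" using nx1 a1 by simp
        finally show ?thesis using a1 by linarith
      qed
      have m2: "real n / (1/x) \<le> 2*a" using nx2 by simp
      have "max ((1/x) / real n) (real n / (1/x)) powr \<eta> \<le> (2*a) powr \<eta>"
        using m1 m2 eta npos x0 by (intro powr_mono2) (auto simp: le_max_iff_disj)
      then have "E * max ((1/x) / real n) (real n / (1/x)) powr \<eta> * L (real n) \<le> E * (2*a) powr \<eta> * L (real n)"
        using Epos Lpos[of "real n"] by (intro mult_right_mono mult_left_mono) auto
      then show ?thesis using pot[OF ix nY] by linarith
    qed
    have "C2/2 * P * x powr (2 - \<gamma>) * L (1 / x)
        = C2/2 * (2*a) powr (\<gamma> - 2) * x powr (2 - \<gamma>) * (L (1/x) / (E * (2*a) powr \<eta>))"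
      unfolding P_def by simp
    also have "\<dots> \<le> C2/2 * (2*a) powr (\<gamma> - 2) * x powr (2 - \<gamma>) * L (real n)"
    proof (rule mult_left_mono)
      show "L (1/x) / (E * (2*a) powr \<eta>) \<le> L (real n)"
        using Ln Epos apos by (simp add: pos_divide_le_eq mult.commute)
      show "0 \<le> C2/2 * (2*a) powr (\<gamma> - 2) * x powr (2 - \<gamma>)" using assms(8) by simp
    qed
    also have "\<dots> = C2/2 * (2*a/x) powr (\<gamma> - 2) * L (real n)" unfolding pw2 by simp
    also have "\<dots> \<le> C2/2 * real n powr (\<gamma> - 2) * L (real n)"
      using pw1 assms(8) Lpos[of "real n"] by (intro mult_right_mono mult_left_mono) auto
    also have "\<dots> \<le> G x" using Gan Gmono by linarith
    finally have "C2/2 * P * x powr (2 - \<gamma>) * L (1 / x) \<le> G x" .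
    moreover have "C3 * x powr (2 - \<gamma>) * L (1 / x) < C2/2 * P * x powr (2 - \<gamma>) * L (1 / x)"
      unfolding C3_def using Ppos assms(8) x0 Lpos[of "1/x"] by simp
    ultimately show ?thesis by linarith
  qed
  show ?thesis
  proof (intro exI[of _ C3] conjI C3pos)
    show "\<forall>\<^sub>F x in at_right 0. measure F {-x..x} > C3 * x powr (2 - \<gamma>) * L (1 / x)"
      unfolding eventually_at_right_field
    proof (intro exI[of _ "min a (min (1/Y0) (a/(Nthr+1)))"] conjI allI impI)
      show "min a (min (1/Y0) (a/(Nthr+1))) > 0" using apos Y0 N1 by simp
      fix x :: real assume "0 < x" "x < min a (min (1/Y0) (a/(Nthr+1)))"
      then show "measure F {-x..x} > C3 * x powr (2 - \<gamma>) * L (1 / x)"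
        using fin[of x] unfolding G_def by auto
    qed
  qed
qed


end
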